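(* Let $d\ge1$, $\sigma^2>0$, $\nu>0$, $\phi>0$, $\boldsymbol\lambda\in\mathbb{R}^d$ and $\boldsymbol\Lambda$ a $d\times d$ symmetric positive-definite matrix. For $\rho>0$ let $C_s(\mathbf{x};\rho)=\sigma^2\exp\{-\|\mathbf{x}\|^2/\rho^2\}$, $\mathbf{x}\in\mathbb{R}^d$, and define $C(\mathbf{h},u;\rho):=E_{\mathbf{v}}[C_s(\mathbf{h}-\mathbf{v}u;\rho)]$ where $\mathbf{v}\sim\mathcal{N}_d(\boldsymbol\lambda,\rho^2\boldsymbol\Lambda/2)$. Define $K(\mathbf{h},u):=\int_0^\infty C(\mathbf{h},u;\rho)\,p(\rho^2)\,\mathrm{d}\rho^2$ where $\rho^2\sim\mathrm{Ga}(\nu,1/(4\phi^2))$ with density $p$. Then for all $(\mathbf{h},u)\in\mathbb{R}^d\times\mathbb{R}$, $$K(\mathbf{h},u)=\sigma^2\,|\mathbf{I}_{d}+u^2\boldsymbol\Lambda|^{-1/2}\,\mathcal{M}(h_u;\nu,\phi),$$ where $h_u:=\{(\mathbf{h}-u\boldsymbol\lambda)^\top(u^2\boldsymbol\Lambda+\mathbf{I}_d)^{-1}(\mathbf{h}-u\boldsymbol\lambda)\}^{1/2}$.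
   Context: $X\sim\mathrm{Ga}(a,b)$ means $X$ has density $\frac{b^a}{\Gamma(a)}x^{a-1}e^{-bx}$, $x>0$ (shape $a$, rate $b$). The Matérn correlation is $\mathcal{M}(r;\nu,\phi)=\frac{2^{1-\nu}}{\Gamma(\nu)}(r/\phi)^\nu\mathcal{K}_\nu(r/\phi)$ for $r>0$ and $\mathcal{M}(0;\nu,\phi)=1$, where $\mathcal{K}_\nu$ is the modified Bessel function of the second kind of order $\nu$. $|\cdot|$ of a matrix denotes its determinant and $\mathbf{I}_d$ the $d\times d$ identity. *)

theory Defs
  imports "HOL-Analysis.Analysis"
begin

definition besselK :: "real \<Rightarrow> real \<Rightarrow> real" where
  "besselK \<nu> x = (LBINT t:{0..}. exp (- x * cosh t) * cosh (\<nu> * t))"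

definition matern :: "real \<Rightarrow> real \<Rightarrow> real \<Rightarrow> real" where
  "matern r \<nu> \<phi> =
     (if r = 0 then 1
      else 2 powr (1 - \<nu>) / Gamma \<nu> * (r / \<phi>) powr \<nu> * besselK \<nu> (r / \<phi>))"

definition gamma_density :: "real \<Rightarrow> real \<Rightarrow> real \<Rightarrow> real" where
  "gamma_density a b x = b powr a / Gamma a * x powr (a - 1) * exp (- b * x)"

definition mvn_density :: "real^'d \<Rightarrow> real^'d^'d \<Rightarrow> real^'d \<Rightarrow> real" where
  "mvn_density \<mu> \<Sigma> v =
     exp (- ((v - \<mu>) \<bullet> (matrix_inv \<Sigma> *v (v - \<mu>))) / 2)
     / sqrt ((2 * pi) ^ CARD('d) * det \<Sigma>)"

definition mvn_expect :: "real^'d \<Rightarrow> real^'d^'d \<Rightarrow> (real^'d \<Rightarrow> real) \<Rightarrow> real" where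
  "mvn_expect \<mu> \<Sigma> f = (\<integral>v. f v * mvn_density \<mu> \<Sigma> v \<partial>lborel)"

definition pos_def_sym :: "real^'d^'d \<Rightarrow> bool" where
  "pos_def_sym A \<longleftrightarrow> transpose A = A \<and> (\<forall>x. x \<noteq> 0 \<longrightarrow> x \<bullet> (A *v x) > 0)"

end

theory Submission
  imports Defs "HOL-Probability.Probability"
begin


lemma det_shear_1:
  fixes m n :: "'n::finite"
  assumes "m \<noteq> n"
  shows "det (matrix (\<lambda>v::real^'n. \<chi> i. if i = m then v $ m + v $ n else v $ i)) = 1"
proof -
  have "matrix (\<lambda>v::real^'n. \<chi> i. if i = m then v $ m + v $ n else v $ i)
      = (\<chi> k. if k = m then row m (mat 1) + 1 *s row n (mat 1) else row k (mat 1 :: real^'n^'n))"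
    by (auto simp: matrix_def vec_eq_iff row_def mat_def axis_def)
  then show ?thesis using det_row_operation[OF assms, of "mat 1 :: real^'n^'n" 1] by simp
qed

lemma my_measure_linear_image:
 fixes f :: "real^'n::finite \<Rightarrow> real^'n"
  assumes "linear f" "S \<in> lmeasurable"
  shows "(f ` S) \<in> lmeasurable \<and> measure lebesgue (f ` S) = \<bar>det (matrix f)\<bar> * measure lebesgue S"
proof -
  have "\<forall>S \<in> lmeasurable. (f ` S) \<in> lmeasurable \<and> measure lebesgue (f ` S) = \<bar>det (matrix f)\<bar> * measure lebesgue S"
  proof (rule induct_linear_elementary [OF \<open>linear f\<close>]; intro ballI)
    fix f g :: "real^'n \<Rightarrow> real^'n" and S :: "(real,'n) vec set"
    assume "linear f" and "linear g"
      and f [rule_format]: "\<forall>S \<in> lmeasurable. f ` S \<in> lmeasurable \<and> measure lebesgue (f ` S) = \<bar>det (matrix f)\<bar> * measure lebesgue S"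
      and g [rule_format]: "\<forall>S \<in> lmeasurable. g ` S \<in> lmeasurable \<and> measure lebesgue (g ` S) = \<bar>det (matrix g)\<bar> * measure lebesgue S"
      and S: "S \<in> lmeasurable"
    then have gS: "g ` S \<in> lmeasurable"
      by blast
    show "(f \<circ> g) ` S \<in> lmeasurable \<and> measure lebesgue ((f \<circ> g) ` S) = \<bar>det (matrix (f \<circ> g))\<bar> * measure lebesgue S"
      using f [OF gS] g [OF S] matrix_compose [OF \<open>linear g\<close> \<open>linear f\<close>]
      by (simp add: o_def image_comp abs_mult det_mul)
  next
    fix f :: "real^'n::_ \<Rightarrow> real^'n::_" and i and S :: "(real^'n::_) set"
    assume "linear f" and 0: "\<And>x. f x $ i = 0" and "S \<in> lmeasurable"
    then have "\<not> inj f"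
      by (metis (full_types) linear_injective_imp_surjective one_neq_zero surjE vec_component)
    have detf: "det (matrix f) = 0"
      using \<open>\<not> inj f\<close> det_nz_iff_inj[OF \<open>linear f\<close>] by blast
    show "f ` S \<in> lmeasurable \<and> measure lebesgue (f ` S) = \<bar>det (matrix f)\<bar> * measure lebesgue S"
    proof
      show "f ` S \<in> lmeasurable"
        using lmeasurable_iff_indicator_has_integral \<open>linear f\<close> \<open>\<not> inj f\<close> negligible_UNIV negligible_linear_singular_image by blast
      have "measure lebesgue (f ` S) = 0"
        by (meson \<open>\<not> inj f\<close> \<open>linear f\<close> negligible_imp_measure0 negligible_linear_singular_image)
      also have "\<dots> = \<bar>det (matrix f)\<bar> * measure lebesgue S"
        by (simp add: detf)
      finally show "measure lebesgue (f ` S) = \<bar>det (matrix f)\<bar> * measure lebesgue S" .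
    qed
  next
    fix c and S :: "(real^'n::_) set"
    assume "S \<in> lmeasurable"
    show "(\<lambda>a. \<chi> i. c i * a $ i) ` S \<in> lmeasurable \<and> measure lebesgue ((\<lambda>a. \<chi> i. c i * a $ i) ` S) = \<bar>det (matrix (\<lambda>a. \<chi> i. c i * a $ i))\<bar> * measure lebesgue S"
    proof
      show "(\<lambda>a. \<chi> i. c i * a $ i) ` S \<in> lmeasurable"
        by (simp add: \<open>S \<in> lmeasurable\<close> measurable_stretch)
      show "measure lebesgue ((\<lambda>a. \<chi> i. c i * a $ i) ` S) = \<bar>det (matrix (\<lambda>a. \<chi> i. c i * a $ i))\<bar> * measure lebesgue S"
        by (simp add: measure_stretch [OF \<open>S \<in> lmeasurable\<close>, of c] axis_def matrix_def det_diagonal)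
    qed
  next
    fix m :: "'n" and n :: "'n" and S :: "(real, 'n) vec set"
    assume "m \<noteq> n" and "S \<in> lmeasurable"
    let ?h = "\<lambda>v::(real, 'n) vec. \<chi> i. v $ Transposition.transpose m n i"
    have lin: "linear ?h"
      by (rule linearI) (simp_all add: plus_vec_def scaleR_vec_def)
    have meq: "measure lebesgue ((\<lambda>v::(real, 'n) vec. \<chi> i. v $ Transposition.transpose m n i) ` cbox a b)
             = measure lebesgue (cbox a b)" for a b
    proof (cases "cbox a b = {}")
      case True then show ?thesis
        by simp
    next
      case False
      then have him: "?h ` (cbox a b) \<noteq> {}"
        by blast
      have eq: "?h ` (cbox a b) = cbox (?h a) (?h b)"
        by (auto simp: image_iff lambda_swap_Galois mem_box_cart) (metis transpose_involutory)+
      show ?thesis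
        using him prod.permute [OF permutes_swap_id, where S=UNIV and g="\<lambda>i. (b - a)$i", symmetric]
        by (simp add: eq content_cbox_cart False)
    qed
    have "(\<chi> i j. if Transposition.transpose m n i = j then 1 else 0) = (\<chi> i j. if j = Transposition.transpose m n i then 1 else (0::real))"
      by (auto intro!: Cart_lambda_cong)
    then have "matrix ?h = transpose(\<chi> i j. mat 1 $ i $ Transposition.transpose m n j)"
      by (auto simp: matrix_eq transpose_def axis_def mat_def matrix_def)
    then have 1: "\<bar>det (matrix ?h)\<bar> = 1"
      by (simp add: det_permute_columns permutes_swap_id sign_swap_id abs_mult)
    show "?h ` S \<in> lmeasurable \<and> measure lebesgue (?h ` S) = \<bar>det (matrix ?h)\<bar> * measure lebesgue S"
      using measure_linear_sufficient [OF lin \<open>S \<in> lmeasurable\<close>] meq 1 by force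
  next
    fix m n :: "'n" and S :: "(real, 'n) vec set"
    assume "m \<noteq> n" and "S \<in> lmeasurable"
    let ?h = "\<lambda>v::(real, 'n) vec. \<chi> i. if i = m then v $ m + v $ n else v $ i"
    have lin: "linear ?h"
      by (rule linearI) (auto simp: algebra_simps plus_vec_def scaleR_vec_def vec_eq_iff)
    have 1: "det(matrix ?h) = 1"
      by (rule det_shear_1[OF \<open>m \<noteq> n\<close>])
    have meq: "measure lebesgue (?h ` (cbox a b)) = measure lebesgue (cbox a b)" for a b
    proof (cases "cbox a b = {}")
      case True then show ?thesis by simp
    next
      case False
      then have ne: "(+) (\<chi> i. if i = n then - a $ n else 0) ` cbox a b \<noteq> {}"
        by auto
      let ?v = "\<chi> i. if i = n then - a $ n else 0"
      have "?h ` cbox a b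
            = (+) (\<chi> i. if i = m \<or> i = n then a $ n else 0) ` ?h ` (+) ?v ` (cbox a b)"
        using \<open>m \<noteq> n\<close> unfolding image_comp o_def by (force simp: vec_eq_iff)
      then have "measure lebesgue (?h ` (cbox a b))
               = measure lebesgue ((\<lambda>v. \<chi> i. if i = m then v $ m + v $ n else v $ i) `
                                   (+) ?v ` cbox a b)"
        by (rule ssubst) (rule measure_translation)
      also have "\<dots> = measure lebesgue ((\<lambda>v. \<chi> i. if i = m then v $ m + v $ n else v $ i) ` cbox (?v +a) (?v + b))"
        by (metis (no_types, lifting) cbox_translation)
      also have "\<dots> = measure lebesgue ((+) ?v ` cbox a b)"
        apply (subst measure_shear_interval)
        using \<open>m \<noteq> n\<close> ne apply auto
        apply (simp add: cbox_translation)
        by (metis cbox_borel cbox_translation measure_completion sets_lborel)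
      also have "\<dots> = measure lebesgue (cbox a b)"
        by (rule measure_translation)
        finally show ?thesis .
      qed
    show "?h ` S \<in> lmeasurable \<and> measure lebesgue (?h ` S) = \<bar>det (matrix ?h)\<bar> * measure lebesgue S"
      using measure_linear_sufficient [OF lin \<open>S \<in> lmeasurable\<close>] meq 1 by force
  qed
  with assms show ?thesis
    by metis
qed



lemma lborel_linear_density:
  fixes g :: "real^'n::finite \<Rightarrow> real^'n"
  assumes lin: "linear g" and dg: "det (matrix g) \<noteq> 0"
  shows "lborel = density (distr lborel borel g) (\<lambda>_. ennreal \<bar>det (matrix g)\<bar>)"
proof -
  have "inj g" using dg det_nz_iff_inj[OF lin] by blast
  then obtain h where hlin: "linear h" and hg: "\<And>x. h (g x) = x" and gh: "\<And>x. g (h x) = x"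
    using linear_injective_isomorphism[OF lin] by (metis dim_UNIV)
  have gmeas[measurable]: "g \<in> borel_measurable borel"
    by (intro borel_measurable_continuous_onI linear_continuous_on lin[unfolded linear_conv_bounded_linear])
  have "matrix (g \<circ> h) = matrix g ** matrix h" by (rule matrix_compose[OF hlin lin])
  moreover have "g \<circ> h = id" using gh by auto
  ultimately have "det (matrix g) * det (matrix h) = 1"
    by (metis det_I det_mul matrix_id_mat_1)
  then have dd: "\<bar>det (matrix g)\<bar> * \<bar>det (matrix h)\<bar> = 1"
    by (metis abs_mult abs_one)
  show ?thesis
  proof (rule lborel_eqI)
    fix l u :: "real^'n" assume le: "\<And>b. b \<in> Basis \<Longrightarrow> l \<bullet> b \<le> u \<bullet> b"
    have pre: "g -` box l u = h ` box l u"
      using hg gh by (auto simp: image_iff) metis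
    have opn: "open (g -` box l u)"
      by (intro open_vimage open_box linear_continuous_on lin[unfolded linear_conv_bounded_linear])
    have hm: "h ` box l u \<in> lmeasurable \<and> measure lebesgue (h ` box l u) = \<bar>det (matrix h)\<bar> * measure lebesgue (box l u)"
      by (rule my_measure_linear_image[OF hlin]) simp
    have "emeasure lborel (g -` box l u) = emeasure lebesgue (g -` box l u)"
      using opn by (simp add: borel_open emeasure_completion)
    also have "\<dots> = ennreal (measure lebesgue (h ` box l u))"
      using hm pre by (simp add: emeasure_eq_measure2)
    also have "\<dots> = ennreal (\<bar>det (matrix h)\<bar> * (\<Prod>b\<in>Basis. (u - l) \<bullet> b))"
      using hm le by (simp add: measure_completion)
    finally have e: "emeasure lborel (g -` box l u) = ennreal (\<bar>det (matrix h)\<bar> * (\<Prod>b\<in>Basis. (u - l) \<bullet> b))" .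
    have "emeasure (density (distr lborel borel g) (\<lambda>_. ennreal \<bar>det (matrix g)\<bar>)) (box l u)
        = ennreal \<bar>det (matrix g)\<bar> * emeasure lborel (g -` box l u)"
      by (simp add: emeasure_density_const emeasure_distr)
    also have "\<dots> = ennreal (\<Prod>b\<in>Basis. (u - l) \<bullet> b)"
      using e dd le by (simp add: ennreal_mult'[symmetric] mult.assoc[symmetric])
    finally show "emeasure (density (distr lborel borel g) (\<lambda>_. ennreal \<bar>det (matrix g)\<bar>)) (box l u) = (\<Prod>b\<in>Basis. (u - l) \<bullet> b)"
      using le by (simp add: prod_nonneg inner_diff_left prod_ennreal)
  qed simp
qed

lemma nn_integral_linear_change:
  fixes g :: "real^'n::finite \<Rightarrow> real^'n" and f :: "real^'n \<Rightarrow> ennreal"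
  assumes lin: "linear g" and dg: "det (matrix g) \<noteq> 0" and fm: "f \<in> borel_measurable borel"
  shows "(\<integral>\<^sup>+x. f x \<partial>lborel) = ennreal \<bar>det (matrix g)\<bar> * (\<integral>\<^sup>+y. f (g y) \<partial>lborel)"
proof -
  have gmeas[measurable]: "g \<in> borel_measurable borel"
    by (intro borel_measurable_continuous_onI linear_continuous_on lin[unfolded linear_conv_bounded_linear])
  have "(\<integral>\<^sup>+x. f x \<partial>lborel) = (\<integral>\<^sup>+x. f x \<partial>density (distr lborel borel g) (\<lambda>_. ennreal \<bar>det (matrix g)\<bar>))"
    using lborel_linear_density[OF lin dg] by simp
  also have "\<dots> = (\<integral>\<^sup>+x. ennreal \<bar>det (matrix g)\<bar> * f x \<partial>distr lborel borel g)"
    using fm by (subst nn_integral_density) auto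
  also have "\<dots> = (\<integral>\<^sup>+y. ennreal \<bar>det (matrix g)\<bar> * f (g y) \<partial>lborel)"
    using fm by (subst nn_integral_distr) auto
  also have "\<dots> = ennreal \<bar>det (matrix g)\<bar> * (\<integral>\<^sup>+y. f (g y) \<partial>lborel)"
    using fm by (subst nn_integral_cmult) auto
  finally show ?thesis .
qed



lemma gauss_1d: "(\<integral>\<^sup>+t. ennreal (exp (- t\<^sup>2)) \<partial>lborel) = ennreal (sqrt pi)"
proof -
  have "has_bochner_integral lborel (\<lambda>x::real. exp (-x\<^sup>2)*x^(2 * 0)) (2 *\<^sub>R ((sqrt pi / 2) * (fact (2 * 0) / (2 ^ (2 * 0) * fact 0))))"
    by (rule has_bochner_integral_even_function[OF gaussian_moment_even_pos]) simp
  then have "has_bochner_integral lborel (\<lambda>x::real. exp (-x\<^sup>2)) (sqrt pi)" by simp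
  then show ?thesis
    by (subst nn_integral_eq_integral) (auto simp: has_bochner_integral_iff)
qed

lemma gauss_std:
  "(\<integral>\<^sup>+x. ennreal (exp (- (norm (x::real^'n::finite))\<^sup>2)) \<partial>lborel) = ennreal (sqrt pi ^ CARD('n))"
proof -
  have eq: "ennreal (exp (- (norm x)\<^sup>2)) = (\<Prod>b\<in>Basis. ennreal (exp (- (x \<bullet> b)\<^sup>2)))" for x :: "real^'n"
  proof -
    have "(norm x)\<^sup>2 = (\<Sum>b\<in>Basis. (x \<bullet> b)\<^sup>2)"
      by (subst power2_norm_eq_inner, subst euclidean_inner) (simp add: power2_eq_square)
    then have "exp (- (norm x)\<^sup>2) = (\<Prod>b\<in>Basis. exp (- (x \<bullet> b)\<^sup>2))"
      by (simp add: exp_sum[symmetric] sum_negf)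
    then show ?thesis by (simp add: prod_ennreal)
  qed
  have "(\<integral>\<^sup>+x. ennreal (exp (- (norm (x::real^'n))\<^sup>2)) \<partial>lborel) = (\<integral>\<^sup>+x. (\<Prod>b\<in>Basis. ennreal (exp (- ((x::real^'n) \<bullet> b)\<^sup>2))) \<partial>lborel)"
    by (simp add: eq)
  also have "\<dots> = (\<Prod>b\<in>(Basis::(real^'n) set). (\<integral>\<^sup>+t. ennreal (exp (- t\<^sup>2)) \<partial>lborel))"
    by (rule nn_integral_lborel_prod) auto
  also have "\<dots> = ennreal (sqrt pi ^ CARD('n))"
    by (simp add: gauss_1d ennreal_power)
  finally show ?thesis .
qed

lemma sym_dot: "transpose P = P \<Longrightarrow> x \<bullet> (P *v y) = y \<bullet> ((P::real^'n::finite^'n) *v x)"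
  by (metis dot_lmul_matrix inner_commute transpose_matrix_vector)

function gs :: "real^'n::finite^'n \<Rightarrow> (nat \<Rightarrow> real^'n) \<Rightarrow> nat \<Rightarrow> real^'n" where
  "gs P B k = B k - (\<Sum>j<k. ((B k \<bullet> (P *v gs P B j)) / (gs P B j \<bullet> (P *v gs P B j))) *\<^sub>R gs P B j)"
  by pat_completeness auto
termination by (relation "Wellfounded.measure (\<lambda>(P,B,k). k)") auto

declare gs.simps[simp del]



lemma gs_span: "gs P B k \<in> span (B ` {..k})"
proof (induction k rule: less_induct)
  case (less k)
  have "B k \<in> span (B ` {..k})" by (intro span_base) auto
  moreover have "(\<Sum>j<k. ((B k \<bullet> (P *v gs P B j)) / (gs P B j \<bullet> (P *v gs P B j))) *\<^sub>R gs P B j) \<in> span (B ` {..k})"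
  proof (intro span_sum span_scale)
    fix j assume "j \<in> {..<k}"
    then have "span (B ` {..j}) \<subseteq> span (B ` {..k})" by (intro span_mono) auto
    then show "gs P B j \<in> span (B ` {..k})" using less \<open>j \<in> {..<k}\<close> by auto
  qed
  ultimately show ?case by (subst gs.simps) (rule span_diff)
qed

lemma gs_diff: "gs P B k - B k \<in> span (B ` {..<k})"
proof -
  have "(\<Sum>j<k. ((B k \<bullet> (P *v gs P B j)) / (gs P B j \<bullet> (P *v gs P B j))) *\<^sub>R gs P B j) \<in> span (B ` {..<k})"
  proof (intro span_sum span_scale)
    fix j assume "j \<in> {..<k}"
    then have "span (B ` {..j}) \<subseteq> span (B ` {..<k})" by (intro span_mono) auto
    then show "gs P B j \<in> span (B ` {..<k})" using gs_span by blast
  qed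
  then show ?thesis by (subst gs.simps) (simp add: span_neg)
qed

lemma gs_nz:
  assumes "B k \<notin> span (B ` {..<k})"
  shows "gs P B k \<noteq> 0"
proof
  assume "gs P B k = 0"
  then have "- B k \<in> span (B ` {..<k})" using gs_diff[of P B k] by simp
  then have "B k \<in> span (B ` {..<k})" using span_neg by fastforce
  with assms show False by blast
qed

lemma gs_orth:
  fixes P :: "real^'n::finite^'n"
  assumes symP: "transpose P = P" and pd: "\<And>x. x \<noteq> 0 \<Longrightarrow> x \<bullet> (P *v x) > 0"
    and indep: "\<And>k. k < n \<Longrightarrow> B k \<notin> span (B ` {..<k})"
  shows "k < n \<Longrightarrow> i < k \<Longrightarrow> gs P B k \<bullet> (P *v gs P B i) = 0"
proof (induction k arbitrary: i rule: less_induct)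
  case (less k)
  define q where "q j = gs P B j \<bullet> (P *v gs P B j)" for j
  have qpos: "q j > 0" if "j < n" for j
    unfolding q_def using pd gs_nz indep that by blast
  have zero: "gs P B j \<bullet> (P *v gs P B i) = 0" if "j < k" "j \<noteq> i" for j
  proof (cases "i < j")
    case True then show ?thesis using less that by auto
  next
    case False
    then have "j < i" using that by auto
    then have "gs P B i \<bullet> (P *v gs P B j) = 0" using less by auto
    then show ?thesis using sym_dot[OF symP] by metis
  qed
  have "gs P B k \<bullet> (P *v gs P B i) = B k \<bullet> (P *v gs P B i)
      - (\<Sum>j<k. ((B k \<bullet> (P *v gs P B j)) / q j) * (gs P B j \<bullet> (P *v gs P B i)))"
    by (subst gs.simps) (simp add: inner_diff_left inner_sum_left q_def)
  also have "(\<Sum>j<k. ((B k \<bullet> (P *v gs P B j)) / q j) * (gs P B j \<bullet> (P *v gs P B i)))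
      = ((B k \<bullet> (P *v gs P B i)) / q i) * (gs P B i \<bullet> (P *v gs P B i))"
    using less.prems zero by (subst sum.remove[of _ i]) auto
  also have "\<dots> = B k \<bullet> (P *v gs P B i)"
    using qpos[of i] less.prems by (simp add: q_def)
  finally show ?case by simp
qed

lemma congruence_id:
  fixes P :: "real^'n::finite^'n"
  assumes symP: "transpose P = P" and pd: "\<And>x. x \<noteq> 0 \<Longrightarrow> x \<bullet> (P *v x) > 0"
  shows "\<exists>F::real^'n^'n. transpose F ** P ** F = mat 1"
proof -
  obtain e where e: "bij_betw e {0..<CARD('n)} (UNIV::'n set)"
    using ex_bij_betw_nat_finite[of "UNIV::'n set"] by auto
  define n where "n = CARD('n)"
  define B where "B k = (axis (e k) 1 :: real^'n)" for k
  have einj: "inj_on e {0..<CARD('n)}" and eim: "e ` {0..<CARD('n)} = UNIV"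
    using e unfolding bij_betw_def by auto
  have indep: "B k \<notin> span (B ` {..<k})" if "k < n" for k
  proof
    assume "B k \<in> span (B ` {..<k})"
    then have "(\<lambda>v. v $ e k = 0) (B k)"
    proof (rule span_induct)
      show "subspace (Collect (\<lambda>v. v $ e k = 0))"
        by (auto simp: subspace_def)
      fix x assume "x \<in> B ` {..<k}"
      then obtain j where j: "j < k" "x = B j" by auto
      have jk: "j \<in> {0..<CARD('n)}" "k \<in> {0..<CARD('n)}" using j that n_def by auto
      have "e j \<noteq> e k"
      proof
        assume "e j = e k"
        then have "j = k" using einj jk unfolding inj_on_def by blast
        then show False using j by simp
      qed
      then show "x $ e k = 0" using j by (simp add: B_def axis_def)
    qed
    then show False by (simp add: B_def axis_def)
  qed
  define k where "k c = the_inv_into {0..<n} e c" for c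
  have ek: "e (k c) = c" for c
    unfolding k_def n_def using einj eim by (intro f_the_inv_into_f) auto
  have kn: "k c < n" for c
  proof -
    have "the_inv_into {0..<CARD('n)} e c \<in> {0..<CARD('n)}"
      using einj eim by (intro the_inv_into_into) auto
    then show ?thesis unfolding k_def n_def by simp
  qed
  define q where "q j = gs P B j \<bullet> (P *v gs P B j)" for j
  have qpos: "q j > 0" if "j < n" for j
    unfolding q_def using pd gs_nz indep that by blast
  define col where "col c = (1 / sqrt (q (k c))) *\<^sub>R gs P B (k c)" for c
  define F where "F = (\<chi> r c. col c $ r)"
  have entry: "(transpose F ** P ** F) $ i $ j = col i \<bullet> (P *v col j)" for i j
    by (simp add: F_def matrix_matrix_mult_def transpose_def matrix_vector_mult_def inner_vec_def
        sum_distrib_left sum_distrib_right mult.assoc mult.left_commute) (rule sum.swap)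
  have "col i \<bullet> (P *v col j) = (if i = j then 1 else 0)" for i j
  proof (cases "i = j")
    case True
    then show ?thesis using qpos[OF kn[of j]]
      by (simp add: col_def matrix_vector_mult_scaleR q_def)
  next
    case False
    then have kk: "k i \<noteq> k j" using ek by metis
    have "gs P B (k i) \<bullet> (P *v gs P B (k j)) = 0"
    proof (cases "k j < k i")
      case True
      then show ?thesis using gs_orth[OF symP pd indep] kn by blast
    next
      case False
      then have "k i < k j" using kk by simp
      then have "gs P B (k j) \<bullet> (P *v gs P B (k i)) = 0"
        using gs_orth[OF symP pd indep] kn by blast
      then show ?thesis using sym_dot[OF symP] by metis
    qed
    then show ?thesis using False by (simp add: col_def matrix_vector_mult_scaleR)
  qed
  then have "transpose F ** P ** F = mat 1"
    by (simp add: vec_eq_iff entry mat_def)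
  then show ?thesis by blast
qed



lemma mv_inner_transpose: "((A::real^'n::finite^'m::finite) *v x) \<bullet> y = x \<bullet> (transpose A *v y)"
  by (simp add: inner_vec_def matrix_vector_mult_def transpose_def sum_distrib_left sum_distrib_right mult_ac)
   (rule sum.swap)

lemma cont_mv: "continuous_on S (\<lambda>x. (P::real^'n::finite^'m::finite) *v x)"
  by (intro linear_continuous_on) (simp add: matrix_vector_mul_linear[unfolded linear_conv_bounded_linear])

lemma meas_quad_real[measurable]: "(\<lambda>x. exp (- ((x - c) \<bullet> ((P::real^'n::finite^'n) *v (x - c))))) \<in> borel_measurable borel"
proof -
  have "continuous_on UNIV (\<lambda>x. exp (- ((x - c) \<bullet> ((P::real^'n::finite^'n) *v (x - c)))))"
    unfolding matrix_vector_mult_diff_distrib by (intro continuous_intros cont_mv)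
  then show ?thesis by (intro borel_measurable_continuous_onI)
qed

lemma meas_quad_real0[measurable]: "(\<lambda>x. exp (- (x \<bullet> ((P::real^'n::finite^'n) *v x)))) \<in> borel_measurable borel"
  using meas_quad_real[of 0 P] by simp

lemma meas_quad[measurable]: "(\<lambda>x. ennreal (exp (- (x \<bullet> ((P::real^'n::finite^'n) *v x))))) \<in> borel_measurable borel"
  using meas_quad_real[of 0 P] by simp

lemma gauss_quad:
  fixes P :: "real^'n::finite^'n" and c :: "real^'n"
  assumes symP: "transpose P = P" and pd: "\<And>x. x \<noteq> 0 \<Longrightarrow> x \<bullet> (P *v x) > 0"
  shows "det P > 0"
    and "(\<integral>\<^sup>+x. ennreal (exp (- ((x - c) \<bullet> (P *v (x - c))))) \<partial>lborel) = ennreal (sqrt pi ^ CARD('n) / sqrt (det P))"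
proof -
  obtain F :: "real^'n^'n" where F: "transpose F ** P ** F = mat 1"
    using congruence_id[OF symP pd] by blast
  have "det (transpose F) * det P * det F = 1"
  proof -
    have "det (transpose F ** P ** F) = 1" using F by simp
    then show ?thesis by (simp only: det_mul)
  qed
  then have dF: "(det F)\<^sup>2 * det P = 1" by (simp add: power2_eq_square algebra_simps)
  then have dF0: "det F \<noteq> 0" by auto
  show dP: "det P > 0"
  proof -
    have "det P = 1 / (det F)\<^sup>2" using dF dF0 by (simp add: field_simps)
    then show ?thesis using dF0 by simp
  qed
  have sq: "sqrt (det P) = 1 / \<bar>det F\<bar>"
  proof -
    have "det P = (1 / \<bar>det F\<bar>)\<^sup>2" using dF dF0 by (simp add: field_simps power2_eq_square abs_mult_self_eq)
    then show ?thesis by simp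
  qed
  have quad: "(F *v y) \<bullet> (P *v (F *v y)) = norm y ^ 2" for y
  proof -
    have "(F *v y) \<bullet> (P *v (F *v y)) = y \<bullet> (transpose F *v (P *v (F *v y)))"
      by (rule mv_inner_transpose)
    also have "\<dots> = y \<bullet> ((transpose F ** P ** F) *v y)"
      by (simp add: matrix_vector_mul_assoc matrix_mul_assoc)
    also have "\<dots> = norm y ^ 2" using F by (simp add: power2_norm_eq_inner)
    finally show ?thesis .
  qed
  let ?f = "\<lambda>x. ennreal (exp (- (x \<bullet> (P *v x))))"
  have "(\<integral>\<^sup>+x. ?f (x - c) \<partial>lborel) = (\<integral>\<^sup>+x. ?f (x - c) \<partial>distr lborel borel ((+) c))"
    by (simp add: lborel_distr_plus)
  also have "\<dots> = (\<integral>\<^sup>+x. ?f x \<partial>lborel)"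
    by (subst nn_integral_distr) auto
  also have "\<dots> = ennreal \<bar>det (matrix ((*v) F))\<bar> * (\<integral>\<^sup>+y. ?f (F *v y) \<partial>lborel)"
    by (rule nn_integral_linear_change) (auto simp: matrix_vector_mul_linear dF0)
  also have "\<dots> = ennreal \<bar>det F\<bar> * (\<integral>\<^sup>+y. ennreal (exp (- (norm (y::real^'n))\<^sup>2)) \<partial>lborel)"
    by (simp add: quad)
  also have "\<dots> = ennreal (sqrt pi ^ CARD('n) / sqrt (det P))"
    by (simp add: gauss_std sq ennreal_mult'[symmetric])
  finally show "(\<integral>\<^sup>+x. ennreal (exp (- ((x - c) \<bullet> (P *v (x - c))))) \<partial>lborel) = ennreal (sqrt pi ^ CARD('n) / sqrt (det P))" .
qed



lemma matrix_inv_props: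
  fixes A :: "real^'n::finite^'n"
  assumes "invertible A"
  shows "A ** matrix_inv A = mat 1" "matrix_inv A ** A = mat 1"
proof -
  from assms obtain B where "A ** B = mat 1 \<and> B ** A = mat 1" unfolding invertible_def by blast
  then have "A ** matrix_inv A = mat 1 \<and> matrix_inv A ** A = mat 1"
    unfolding matrix_inv_def by (rule someI)
  then show "A ** matrix_inv A = mat 1" "matrix_inv A ** A = mat 1" by auto
qed

lemma matrix_inv_unique':
  fixes A B :: "real^'n::finite^'n"
  assumes "A ** B = mat 1"
  shows "invertible A" "matrix_inv A = B"
proof -
  have "B ** A = mat 1" using assms matrix_left_right_inverse by blast
  then show inv: "invertible A" using assms unfolding invertible_def by blast
  have "matrix_inv A = matrix_inv A ** (A ** B)" using assms by simp
  also have "\<dots> = B" using matrix_inv_props(2)[OF inv] by (simp add: matrix_mul_assoc)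
  finally show "matrix_inv A = B" .
qed

lemma pd_invertible:
  fixes A :: "real^'n::finite^'n"
  assumes "\<And>x. x \<noteq> 0 \<Longrightarrow> x \<bullet> (A *v x) > 0"
  shows "invertible A"
proof -
  have "\<forall>x. A *v x = 0 \<longrightarrow> x = 0" using assms by (metis inner_zero_right less_irrefl)
  then obtain B :: "real^'n^'n" where "B ** A = mat 1" using matrix_left_invertible_ker by blast
  then show ?thesis unfolding invertible_left_inverse by blast
qed

lemma matrix_inv_scaleR:
  fixes A :: "real^'n::finite^'n"
  assumes "invertible A" "c \<noteq> 0"
  shows "matrix_inv (c *\<^sub>R A) = (1 / c) *\<^sub>R matrix_inv A"
proof (rule matrix_inv_unique'(2))
  show "c *\<^sub>R A ** ((1 / c) *\<^sub>R matrix_inv A) = mat 1"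
    using matrix_inv_props(1)[OF assms(1)] assms(2)
    by (simp add: matrix_scalar_ac scalar_matrix_assoc[symmetric])
qed

lemma transpose_add': "transpose (A + B) = transpose A + transpose (B::real^'n::finite^'m::finite)"
  by (simp add: transpose_def vec_eq_iff)

lemma matrix_inv_sym:
  fixes A :: "real^'n::finite^'n"
  assumes "invertible A" "transpose A = A"
  shows "transpose (matrix_inv A) = matrix_inv A"
proof -
  have "A ** transpose (matrix_inv A) = mat 1"
    using matrix_inv_props(2)[OF assms(1)] assms(2)
    by (metis matrix_transpose_mul transpose_mat)
  then show ?thesis using matrix_inv_unique'(2) by metis
qed

lemma det_scaleR': "det (c *\<^sub>R (A::real^'n::finite^'n)) = c ^ CARD('n) * det A"
proof -
  have "c *\<^sub>R A = (c *\<^sub>R mat 1) ** A" by (simp add: scalar_matrix_assoc[symmetric])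
  moreover have "det (c *\<^sub>R (mat 1 :: real^'n^'n)) = c ^ CARD('n)"
  proof -
    have "det (c *\<^sub>R (mat 1 :: real^'n^'n)) = (\<Prod>i\<in>UNIV. (c *\<^sub>R (mat 1 :: real^'n^'n)) $ i $ i)"
      by (rule det_diagonal) (simp add: mat_def)
    then show ?thesis by (simp add: mat_def)
  qed
  ultimately show ?thesis by (simp add: det_mul)
qed



lemma matrix_add_rdistrib': "((B + C) ** A) = (B ** A) + (C ** (A::real^'n::finite^'m::finite))"
  by (vector matrix_matrix_mult_def sum.distrib[symmetric] field_simps)

lemma C_formula:
  fixes \<sigma>2 u s :: real and lam h :: "real^'d::finite" and \<Lambda> :: "real^'d^'d"
  assumes s: "s > 0" and \<Lambda>: "pos_def_sym \<Lambda>"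
  shows "mvn_expect lam ((s / 2) *\<^sub>R \<Lambda>) (\<lambda>v. \<sigma>2 * exp (- (norm (h - u *\<^sub>R v))\<^sup>2 / s))
       = \<sigma>2 * det (mat 1 + u\<^sup>2 *\<^sub>R \<Lambda>) powr (-1/2) *
         exp (- ((h - u *\<^sub>R lam) \<bullet> (matrix_inv (u\<^sup>2 *\<^sub>R \<Lambda> + mat 1) *v (h - u *\<^sub>R lam))) / s)"
proof -
  have sym\<Lambda>: "transpose \<Lambda> = \<Lambda>" and pd\<Lambda>: "\<And>x. x \<noteq> 0 \<Longrightarrow> x \<bullet> (\<Lambda> *v x) > 0"
    using \<Lambda> unfolding pos_def_sym_def by auto
  have inv\<Lambda>: "invertible \<Lambda>" by (rule pd_invertible[OF pd\<Lambda>])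
  define Lm where "Lm = matrix_inv \<Lambda>"
  have \<Lambda>L: "\<Lambda> ** Lm = mat 1" and L\<Lambda>: "Lm ** \<Lambda> = mat 1"
    using matrix_inv_props[OF inv\<Lambda>] by (auto simp: Lm_def)
  have symL: "transpose Lm = Lm" unfolding Lm_def by (rule matrix_inv_sym[OF inv\<Lambda> sym\<Lambda>])
  have pdL: "x \<bullet> (Lm *v x) > 0" if "x \<noteq> 0" for x
  proof -
    define y where "y = Lm *v x"
    have xy: "\<Lambda> *v y = x" unfolding y_def by (simp add: matrix_vector_mul_assoc \<Lambda>L)
    then have "y \<noteq> 0" using that by auto
    then have "y \<bullet> (\<Lambda> *v y) > 0" by (rule pd\<Lambda>)
    then show ?thesis using xy by (simp add: y_def[symmetric] inner_commute)
  qed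
  define M where "M = u\<^sup>2 *\<^sub>R \<Lambda> + mat 1"
  have pdM: "x \<bullet> (M *v x) > 0" if "x \<noteq> 0" for x
  proof -
    have "x \<bullet> (\<Lambda> *v x) \<ge> 0" using pd\<Lambda>[of x] that by simp
    then have "u\<^sup>2 * (x \<bullet> (\<Lambda> *v x)) \<ge> 0" by simp
    moreover have "x \<bullet> x > 0" using that by simp
    moreover have "x \<bullet> (M *v x) = u\<^sup>2 * (x \<bullet> (\<Lambda> *v x)) + x \<bullet> x"
      by (simp add: M_def matrix_vector_mult_add_rdistrib scaleR_matrix_vector_assoc[symmetric] inner_add_right)
    ultimately show ?thesis by linarith
  qed
  have invM: "invertible M" by (rule pd_invertible[OF pdM])
  define N where "N = matrix_inv M"
  have MN: "M ** N = mat 1" and NM: "N ** M = mat 1"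
    using matrix_inv_props[OF invM] by (auto simp: N_def)
  define A where "A = u\<^sup>2 *\<^sub>R mat 1 + Lm"
  have symA: "transpose A = A" by (simp add: A_def transpose_add' transpose_scalar symL)
  have pdA: "x \<bullet> (A *v x) > 0" if "x \<noteq> 0" for x
  proof -
    have "u\<^sup>2 * (x \<bullet> x) \<ge> 0" by simp
    moreover have "x \<bullet> (Lm *v x) > 0" using pdL that by blast
    moreover have "x \<bullet> (A *v x) = u\<^sup>2 * (x \<bullet> x) + x \<bullet> (Lm *v x)"
      by (simp add: A_def matrix_vector_mult_add_rdistrib scaleR_matrix_vector_assoc[symmetric] inner_add_right)
    ultimately show ?thesis by linarith
  qed
  have \<Lambda>A: "\<Lambda> ** A = M"
    by (simp add: A_def M_def matrix_add_ldistrib matrix_scalar_ac \<Lambda>L add.commute)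
  have A\<Lambda>: "A ** \<Lambda> = M"
    by (simp add: A_def M_def matrix_add_rdistrib' scalar_matrix_assoc[symmetric] L\<Lambda>)
  have \<Lambda>M: "\<Lambda> ** M = M ** \<Lambda>"
    by (simp add: M_def matrix_add_ldistrib matrix_add_rdistrib' matrix_scalar_ac scalar_matrix_assoc[symmetric])
  have comm: "N ** \<Lambda> = \<Lambda> ** N"
  proof -
    have "N ** \<Lambda> = N ** \<Lambda> ** (M ** N)" by (simp add: MN)
    also have "\<dots> = N ** (\<Lambda> ** M) ** N" by (simp add: matrix_mul_assoc)
    also have "\<dots> = (N ** M) ** \<Lambda> ** N" by (simp add: \<Lambda>M matrix_mul_assoc)
    also have "\<dots> = \<Lambda> ** N" by (simp add: NM)
    finally show ?thesis .
  qed
  have key: "A ** (N ** \<Lambda>) = mat 1"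
    by (simp add: comm matrix_mul_assoc A\<Lambda> MN)
  define g where "g = h - u *\<^sub>R lam"
  define p where "p = N *v (\<Lambda> *v g)"
  define m where "m = u *\<^sub>R p"
  define Q where "Q = g \<bullet> (N *v g)"
  have Ap: "A *v p = g" unfolding p_def by (simp add: matrix_vector_mul_assoc key)
  have gdec: "g = u\<^sup>2 *\<^sub>R p + N *v g"
  proof -
    have "g = N *v (M *v g)" by (simp add: matrix_vector_mul_assoc NM)
    also have "\<dots> = u\<^sup>2 *\<^sub>R p + N *v g"
      by (simp add: M_def p_def matrix_vector_mult_add_rdistrib scaleR_matrix_vector_assoc[symmetric]
          matrix_vector_right_distrib matrix_vector_mult_scaleR)
    finally show ?thesis .
  qed
  have ident: "(norm (g - u *\<^sub>R w))\<^sup>2 + w \<bullet> (Lm *v w) = (w - m) \<bullet> (A *v (w - m)) + Q" for w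
  proof -
    have Am: "A *v m = u *\<^sub>R g" by (simp add: m_def matrix_vector_mult_scaleR Ap)
    have Aw: "w \<bullet> (A *v w) = u\<^sup>2 * (w \<bullet> w) + w \<bullet> (Lm *v w)"
      by (simp add: A_def matrix_vector_mult_add_rdistrib scaleR_matrix_vector_assoc[symmetric] inner_add_right)
    have mAw: "m \<bullet> (A *v w) = u * (w \<bullet> g)"
      using sym_dot[OF symA, of m w] Am by simp
    have mAm: "m \<bullet> (A *v m) = u\<^sup>2 * (p \<bullet> g)"
      using Am by (simp add: m_def power2_eq_square)
    have gg: "g \<bullet> g = u\<^sup>2 * (p \<bullet> g) + Q"
      unfolding Q_def by (subst (1) gdec) (simp add: inner_add_left inner_add_right inner_commute)
    have "(w - m) \<bullet> (A *v (w - m)) = w \<bullet> (A *v w) - w \<bullet> (A *v m) - m \<bullet> (A *v w) + m \<bullet> (A *v m)"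
      by (simp add: matrix_vector_mult_diff_distrib inner_diff_left inner_diff_right)
    also have "\<dots> = u\<^sup>2 * (w \<bullet> w) + w \<bullet> (Lm *v w) - 2 * u * (w \<bullet> g) + u\<^sup>2 * (p \<bullet> g)"
      using Aw mAw mAm Am by simp
    finally have r: "(w - m) \<bullet> (A *v (w - m)) = u\<^sup>2 * (w \<bullet> w) + w \<bullet> (Lm *v w) - 2 * u * (w \<bullet> g) + u\<^sup>2 * (p \<bullet> g)" .
    have l: "(norm (g - u *\<^sub>R w))\<^sup>2 = g \<bullet> g - 2 * u * (w \<bullet> g) + u\<^sup>2 * (w \<bullet> w)"
      by (simp only: power2_norm_eq_inner) (simp add: inner_diff_left inner_diff_right inner_commute power2_eq_square algebra_simps)
    show ?thesis using r l gg by linarith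
  qed
  define P' where "P' = (1/s) *\<^sub>R A"
  define c0 where "c0 = lam + m"
  define Z where "Z = sqrt ((2 * pi) ^ CARD('d) * det ((s/2) *\<^sub>R \<Lambda>))"
  define K1 where "K1 = \<sigma>2 * exp (- Q / s) / Z"
  have invS: "matrix_inv ((s/2) *\<^sub>R \<Lambda>) = (2/s) *\<^sub>R Lm"
    using matrix_inv_scaleR[OF inv\<Lambda>, of "s/2"] s by (simp add: Lm_def)
  have pt: "\<sigma>2 * exp (- (norm (h - u *\<^sub>R v))\<^sup>2 / s) * mvn_density lam ((s/2) *\<^sub>R \<Lambda>) v
      = K1 * exp (- ((v - c0) \<bullet> (P' *v (v - c0))))" for v
  proof -
    define w where "w = v - lam"
    have e1: "h - u *\<^sub>R v = g - u *\<^sub>R w" by (simp add: g_def w_def algebra_simps)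
    have e2: "v - c0 = w - m" by (simp add: c0_def w_def)
    have e3: "(w \<bullet> (matrix_inv ((s/2) *\<^sub>R \<Lambda>) *v w)) / 2 = (w \<bullet> (Lm *v w)) / s"
      by (simp add: invS scaleR_matrix_vector_assoc[symmetric])
    have e4: "(v - c0) \<bullet> (P' *v (v - c0)) = ((w - m) \<bullet> (A *v (w - m))) / s"
      by (simp add: e2 P'_def scaleR_matrix_vector_assoc[symmetric])
    have ex: "- (norm (h - u *\<^sub>R v))\<^sup>2 / s + (- (w \<bullet> (matrix_inv ((s/2) *\<^sub>R \<Lambda>) *v w)) / 2)
        = - Q / s + - ((v - c0) \<bullet> (P' *v (v - c0)))"
    proof -
      have "- (norm (h - u *\<^sub>R v))\<^sup>2 / s + (- (w \<bullet> (matrix_inv ((s/2) *\<^sub>R \<Lambda>) *v w)) / 2)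
          = - ((norm (g - u *\<^sub>R w))\<^sup>2 + w \<bullet> (Lm *v w)) / s"
        using e3 s unfolding e1 by (simp add: field_simps)
      also have "\<dots> = - Q / s + - ((v - c0) \<bullet> (P' *v (v - c0)))"
        using s unfolding ident e4 by (simp add: field_simps)
      finally show ?thesis .
    qed
    have "\<sigma>2 * exp (- (norm (h - u *\<^sub>R v))\<^sup>2 / s) * mvn_density lam ((s/2) *\<^sub>R \<Lambda>) v
        = \<sigma>2 * exp (- (norm (h - u *\<^sub>R v))\<^sup>2 / s + (- (w \<bullet> (matrix_inv ((s/2) *\<^sub>R \<Lambda>) *v w)) / 2)) / Z"
      unfolding mvn_density_def Z_def w_def mult_exp_exp[symmetric] by simp
    also have "\<dots> = K1 * exp (- ((v - c0) \<bullet> (P' *v (v - c0))))"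
      unfolding ex K1_def mult_exp_exp[symmetric] by simp
    finally show ?thesis .
  qed
  have symP': "transpose P' = P'" by (simp add: P'_def transpose_scalar symA)
  have pdP': "x \<bullet> (P' *v x) > 0" if "x \<noteq> 0" for x
    using pdA[OF that] s by (simp add: P'_def scaleR_matrix_vector_assoc[symmetric])
  have gq: "(\<integral>\<^sup>+x. ennreal (exp (- ((x - c0) \<bullet> (P' *v (x - c0))))) \<partial>lborel)
      = ennreal (sqrt pi ^ CARD('d) / sqrt (det P'))"
    by (rule gauss_quad(2)[OF symP' pdP'])
  have int: "(\<integral>x. exp (- ((x - c0) \<bullet> (P' *v (x - c0)))) \<partial>lborel) = sqrt pi ^ CARD('d) / sqrt (det P')"
    using gauss_quad(1)[OF symP' pdP'] by (subst integral_eq_nn_integral) (auto simp: gq)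
  have "mvn_expect lam ((s / 2) *\<^sub>R \<Lambda>) (\<lambda>v. \<sigma>2 * exp (- (norm (h - u *\<^sub>R v))\<^sup>2 / s))
      = K1 * (sqrt pi ^ CARD('d) / sqrt (det P'))"
    unfolding mvn_expect_def pt int[symmetric] by simp
  also have "\<dots> = \<sigma>2 * det (mat 1 + u\<^sup>2 *\<^sub>R \<Lambda>) powr (-1/2) *
         exp (- ((h - u *\<^sub>R lam) \<bullet> (matrix_inv (u\<^sup>2 *\<^sub>R \<Lambda> + mat 1) *v (h - u *\<^sub>R lam))) / s)"
  proof -
    have Qe: "(h - u *\<^sub>R lam) \<bullet> (matrix_inv (u\<^sup>2 *\<^sub>R \<Lambda> + mat 1) *v (h - u *\<^sub>R lam)) = Q"
      by (simp add: Q_def g_def N_def M_def)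
    have Me: "mat 1 + u\<^sup>2 *\<^sub>R \<Lambda> = M" by (simp add: M_def add.commute)
    have d\<Lambda>: "det \<Lambda> > 0" by (rule gauss_quad(1)[OF sym\<Lambda> pd\<Lambda>])
    have dA: "det A > 0" by (rule gauss_quad(1)[OF symA pdA])
    have dM: "det M = det \<Lambda> * det A" using \<Lambda>A det_mul by metis
    have dMp: "det M > 0" using dM d\<Lambda> dA by simp
    have dP'e: "det P' = (1/s)^CARD('d) * det A" by (simp add: P'_def det_scaleR')
    have dSe: "det ((s/2) *\<^sub>R \<Lambda>) = (s/2)^CARD('d) * det \<Lambda>" by (simp add: det_scaleR')
    have pw: "(2*pi)^CARD('d) * (s/2)^CARD('d) * (1/s)^CARD('d) = pi^CARD('d)"
    proof -
      have "(2*pi)^CARD('d) * (s/2)^CARD('d) * (1/s)^CARD('d) = (2*pi*(s/2)*(1/s))^CARD('d)"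
        by (simp only: power_mult_distrib)
      also have "2*pi*(s/2)*(1/s) = pi" using s by simp
      finally show ?thesis .
    qed
    have ZZ: "Z * sqrt (det P') = sqrt pi ^ CARD('d) * sqrt (det M)"
    proof -
      have "Z * sqrt (det P') = sqrt (((2*pi)^CARD('d) * ((s/2)^CARD('d) * det \<Lambda>)) * ((1/s)^CARD('d) * det A))"
        unfolding Z_def dP'e dSe by (rule real_sqrt_mult[symmetric])
      also have "((2*pi)^CARD('d) * ((s/2)^CARD('d) * det \<Lambda>)) * ((1/s)^CARD('d) * det A)
          = ((2*pi)^CARD('d) * (s/2)^CARD('d) * (1/s)^CARD('d)) * (det \<Lambda> * det A)"
        by (simp only: ac_simps)
      also have "((2*pi)^CARD('d) * (s/2)^CARD('d) * (1/s)^CARD('d)) * (det \<Lambda> * det A) = pi^CARD('d) * det M"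
        by (simp only: pw dM)
      also have "sqrt (pi^CARD('d) * det M) = sqrt pi ^ CARD('d) * sqrt (det M)" by (simp add: real_sqrt_mult real_sqrt_power)
      finally show ?thesis .
    qed
    have dP'p: "det P' > 0" by (rule gauss_quad(1)[OF symP' pdP'])
    have spp: "sqrt pi ^ CARD('d) > 0" by simp
    have pwM: "det M powr (-1/2) = 1 / sqrt (det M)"
      using dMp by (simp add: powr_minus_divide powr_half_sqrt)
    have "K1 * (sqrt pi ^ CARD('d) / sqrt (det P')) = \<sigma>2 * exp (- Q / s) * sqrt pi ^ CARD('d) / (Z * sqrt (det P'))"
      by (simp add: K1_def)
    also have "\<dots> = \<sigma>2 * exp (- Q / s) / sqrt (det M)"
      unfolding ZZ using spp dMp by (simp add: field_simps)
    finally show ?thesis unfolding Qe Me pwM by simp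
  qed
  finally show ?thesis .
qed



lemma ennreal_mult_ind: "ennreal (a * indicator S x) = ennreal a * indicator S x"
  by (simp split: split_indicator)

lemma exp_subst:
  fixes F :: "real \<Rightarrow> real" and c :: real
  assumes c: "c > 0" and Fm[measurable]: "F \<in> borel_measurable borel"
  shows "(\<integral>\<^sup>+s. ennreal (F s) * indicator {0<..} s \<partial>lborel)
       = (\<integral>\<^sup>+t. ennreal (F (c * exp t) * (c * exp t)) \<partial>lborel)"
proof -
  define D1 where "D1 = density lborel (\<lambda>s. ennreal (F s))"
  define D2 where "D2 = density lborel (\<lambda>t. ennreal (F (c * exp t) * (c * exp t)))"
  define A where "A n = {c * exp (- real n) .. c * exp (real n)}" for n :: nat
  define B where "B n = {- real n .. real n}" for n :: nat
  have sbm: "set_borel_measurable borel {a..b} F" for a b :: real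
    unfolding set_borel_measurable_def
    by (intro borel_measurable_scaleR borel_measurable_indicator' Fm) auto
  have sub: "emeasure D1 (A n) = emeasure D2 (B n)" for n
  proof -
    have "emeasure D1 (A n) = (\<integral>\<^sup>+x. ennreal (F x * indicator (A n) x) \<partial>lborel)"
      unfolding D1_def by (subst emeasure_density) (auto simp: A_def ennreal_mult_ind)
    also have "\<dots> = (\<integral>\<^sup>+x. ennreal (F (c * exp x) * (c * exp x) * indicator (B n) x) \<partial>lborel)"
      unfolding A_def B_def
      by (rule nn_integral_substitution[where g = "\<lambda>x. c * exp x" and g' = "\<lambda>x. c * exp x", simplified])
         (auto intro!: derivative_eq_intros continuous_intros sbm simp: c less_imp_le)
    also have "\<dots> = emeasure D2 (B n)"
      unfolding D2_def by (subst emeasure_density) (auto simp: B_def ennreal_mult_ind)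
    finally show ?thesis .
  qed
  have incA: "incseq A" unfolding A_def
    by (intro monoI) (auto simp: c)
  have incB: "incseq B" unfolding B_def
    by (intro monoI) auto
  have UA: "(\<Union>n. A n) = {0<..}"
  proof (intro equalityI subsetI)
    fix x assume "x \<in> (\<Union>n. A n)"
    then show "x \<in> {0<..}" using c by (auto simp: A_def intro: less_le_trans[of 0 "c * exp _"])
  next
    fix x :: real assume "x \<in> {0<..}"
    then have x: "x > 0" by simp
    obtain n :: nat where n: "\<bar>ln (x / c)\<bar> \<le> real n" using real_arch_simple by blast
    have "c * exp (- real n) \<le> x"
    proof -
      have "exp (- real n) \<le> exp (ln (x / c))" using n by simp
      then show ?thesis using x c by (simp add: field_simps)
    qed
    moreover have "x \<le> c * exp (real n)"
    proof -
      have "exp (ln (x / c)) \<le> exp (real n)" using n by simp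
      then show ?thesis using x c by (simp add: field_simps)
    qed
    ultimately show "x \<in> (\<Union>n. A n)" by (auto simp: A_def)
  qed
  have UB: "(\<Union>n. B n) = UNIV"
  proof (intro equalityI subsetI)
    fix x :: real
    obtain n :: nat where "\<bar>x\<bar> \<le> real n" using real_arch_simple by blast
    then have "x \<in> B n" by (auto simp: B_def abs_le_iff)
    then show "x \<in> (\<Union>n. B n)" by blast
  qed simp
  have "(\<integral>\<^sup>+s. ennreal (F s) * indicator {0<..} s \<partial>lborel) = emeasure D1 {0<..}"
    unfolding D1_def by (subst emeasure_density) auto
  also have "\<dots> = (SUP n. emeasure D1 (A n))"
    unfolding UA[symmetric] by (rule SUP_emeasure_incseq[symmetric, OF _ incA]) (auto simp: D1_def A_def)
  also have "\<dots> = (SUP n. emeasure D2 (B n))" by (simp add: sub)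
  also have "\<dots> = emeasure D2 UNIV"
    unfolding UB[symmetric] by (rule SUP_emeasure_incseq[OF _ incB]) (auto simp: D2_def B_def)
  also have "\<dots> = (\<integral>\<^sup>+t. ennreal (F (c * exp t) * (c * exp t)) \<partial>lborel)"
    unfolding D2_def by (subst emeasure_density) auto
  finally show ?thesis .
qed

lemma reflect_nn:
  fixes G :: "real \<Rightarrow> real"
  assumes Gm[measurable]: "G \<in> borel_measurable borel" and G0: "\<And>t. G t \<ge> 0"
  shows "(\<integral>\<^sup>+t. ennreal (G t) \<partial>lborel) = (\<integral>\<^sup>+t. ennreal (G t + G (- t)) * indicator {0..} t \<partial>lborel)"
proof -
  have "(\<integral>\<^sup>+t. ennreal (G t) \<partial>lborel)
      = (\<integral>\<^sup>+t. ennreal (G t) * indicator {0<..} t + ennreal (G t) * indicator {..0} t \<partial>lborel)"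
    by (intro nn_integral_cong) (auto split: split_indicator)
  also have "\<dots> = (\<integral>\<^sup>+t. ennreal (G t) * indicator {0<..} t \<partial>lborel) + (\<integral>\<^sup>+t. ennreal (G t) * indicator {..0} t \<partial>lborel)"
    by (rule nn_integral_add) measurable
  also have "(\<integral>\<^sup>+t. ennreal (G t) * indicator {0<..} t \<partial>lborel) = (\<integral>\<^sup>+t. ennreal (G t) * indicator {0..} t \<partial>lborel)"
  proof (rule nn_integral_cong_AE)
    show "AE t in lborel. ennreal (G t) * indicator {0<..} t = ennreal (G t) * indicator {0..} t"
      using AE_lborel_singleton[of 0] by eventually_elim (auto split: split_indicator)
  qed
  also have "(\<integral>\<^sup>+t. ennreal (G t) * indicator {..0} t \<partial>lborel)
      = (\<integral>\<^sup>+t. ennreal (G t) * indicator {..0} t \<partial>distr lborel borel uminus)"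
    by (simp add: lborel_distr_uminus)
  also have "\<dots> = (\<integral>\<^sup>+t. ennreal (G (- t)) * indicator {..0} (- t) \<partial>lborel)"
    by (subst nn_integral_distr) simp_all
  also have "\<dots> = (\<integral>\<^sup>+t. ennreal (G (- t)) * indicator {0..} t \<partial>lborel)"
    by (intro nn_integral_cong) (auto split: split_indicator)
  also have "(\<integral>\<^sup>+t. ennreal (G t) * indicator {0..} t \<partial>lborel) + (\<integral>\<^sup>+t. ennreal (G (- t)) * indicator {0..} t \<partial>lborel)
      = (\<integral>\<^sup>+t. ennreal (G t) * indicator {0..} t + ennreal (G (- t)) * indicator {0..} t \<partial>lborel)"
    by (rule nn_integral_add[symmetric]) measurable
  also have "\<dots> = (\<integral>\<^sup>+t. ennreal (G t + G (- t)) * indicator {0..} t \<partial>lborel)"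
    using G0 by (intro nn_integral_cong) (auto split: split_indicator simp: ennreal_plus)
  finally show ?thesis .
qed



lemma set_lint_nn:
  fixes f :: "real \<Rightarrow> real"
  assumes [measurable]: "f \<in> borel_measurable borel" "A \<in> sets borel" and nn: "\<And>x. x \<in> A \<Longrightarrow> f x \<ge> 0"
  shows "(LBINT x:A. f x) = enn2real (\<integral>\<^sup>+x. ennreal (f x) * indicator A x \<partial>lborel)"
proof -
  have "(LBINT x:A. f x) = (\<integral>x. indicator A x * f x \<partial>lborel)"
    by (simp add: set_lebesgue_integral_def)
  also have "\<dots> = enn2real (\<integral>\<^sup>+x. ennreal (indicator A x * f x) \<partial>lborel)"
    using nn by (intro integral_eq_nn_integral) (auto split: split_indicator)
  also have "(\<integral>\<^sup>+x. ennreal (indicator A x * f x) \<partial>lborel) = (\<integral>\<^sup>+x. ennreal (f x) * indicator A x \<partial>lborel)"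
    by (intro nn_integral_cong) (auto split: split_indicator)
  finally show ?thesis .
qed

lemma gamma_total:
  fixes \<nu> b :: real
  assumes \<nu>: "\<nu> > 0" and b: "b > 0"
  shows "(\<integral>\<^sup>+x. ennreal (gamma_density \<nu> b x) * indicator {0<..} x \<partial>lborel) = 1"
proof -
  have G: "(\<integral>\<^sup>+t. ennreal (t powr (\<nu> - 1) / exp t) * indicator {0..} t \<partial>lborel) = ennreal (Gamma \<nu>)"
    by (rule nn_integral_has_integral_lebesgue'[OF _ Gamma_integral_real[OF \<nu>]]) simp
  have "(\<integral>\<^sup>+t. ennreal (t powr (\<nu> - 1) / exp t) * indicator {0..} t \<partial>lborel)
      = ennreal b * (\<integral>\<^sup>+x. ennreal ((0 + b * x) powr (\<nu> - 1) / exp (0 + b * x)) * indicator {0..} (0 + b * x) \<partial>lborel)"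
    using b by (subst nn_integral_real_affine[where c = b and t = 0]) auto
  also have "(\<integral>\<^sup>+x. ennreal ((0 + b * x) powr (\<nu> - 1) / exp (0 + b * x)) * indicator {0..} (0 + b * x) \<partial>lborel)
      = (\<integral>\<^sup>+x. ennreal (b powr (\<nu> - 1)) * (ennreal (x powr (\<nu> - 1) * exp (- b * x)) * indicator {0..} x) \<partial>lborel)"
    using b by (intro nn_integral_cong)
      (auto split: split_indicator simp: powr_mult ennreal_mult[symmetric] exp_minus field_simps zero_le_mult_iff)
  also have "\<dots> = ennreal (b powr (\<nu> - 1)) * (\<integral>\<^sup>+x. ennreal (x powr (\<nu> - 1) * exp (- b * x)) * indicator {0..} x \<partial>lborel)"
    by (rule nn_integral_cmult) measurable
  finally have I: "ennreal (Gamma \<nu>) = ennreal b * (ennreal (b powr (\<nu> - 1)) * (\<integral>\<^sup>+x. ennreal (x powr (\<nu> - 1) * exp (- b * x)) * indicator {0..} x \<partial>lborel))"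
    using G by simp
  define I where "I = (\<integral>\<^sup>+x. ennreal (x powr (\<nu> - 1) * exp (- b * x)) * indicator {0..} x \<partial>lborel)"
  have bb: "b * b powr (\<nu> - 1) = b powr \<nu>" using b by (simp add: powr_diff field_simps)
  have I2: "ennreal (Gamma \<nu>) = ennreal (b powr \<nu>) * I"
    using I b unfolding I_def by (simp add: ennreal_mult[symmetric] mult.assoc[symmetric] bb)
  have gpos: "Gamma \<nu> > 0" using \<nu> by (rule Gamma_real_pos)
  have "(\<integral>\<^sup>+x. ennreal (gamma_density \<nu> b x) * indicator {0<..} x \<partial>lborel)
      = (\<integral>\<^sup>+x. ennreal (b powr \<nu> / Gamma \<nu>) * (ennreal (x powr (\<nu> - 1) * exp (- b * x)) * indicator {0..} x) \<partial>lborel)"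
    using b gpos by (intro nn_integral_cong)
      (auto split: split_indicator simp: gamma_density_def ennreal_mult[symmetric] mult.assoc)
  also have "\<dots> = ennreal (b powr \<nu> / Gamma \<nu>) * I"
    unfolding I_def by (rule nn_integral_cmult) measurable
  also have "\<dots> = ennreal (1 / Gamma \<nu>) * (ennreal (b powr \<nu>) * I)"
    using b gpos by (simp add: ennreal_mult[symmetric] mult.assoc[symmetric])
  also have "\<dots> = 1" using gpos by (simp add: I2[symmetric] ennreal_mult[symmetric])
  finally show ?thesis .
qed

lemma cosh_meas[measurable]: "(cosh :: real \<Rightarrow> real) \<in> borel_measurable borel"
proof -
  have "(\<lambda>x::real. (exp x + exp (- x)) / 2) \<in> borel_measurable borel" by measurable
  moreover have "(\<lambda>x::real. (exp x + exp (- x)) / 2) = cosh" by (simp add: fun_eq_iff cosh_def)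
  ultimately show ?thesis by simp
qed

lemma bessel_mixture_pos:
  fixes \<nu> \<phi> r :: real
  assumes \<nu>: "\<nu> > 0" and \<phi>: "\<phi> > 0" and r: "r > 0"
  shows "(LBINT s:{0<..}. exp (- r\<^sup>2 / s) * gamma_density \<nu> (1 / (4 * \<phi>\<^sup>2)) s)
       = 2 powr (1 - \<nu>) / Gamma \<nu> * (r / \<phi>) powr \<nu> * besselK \<nu> (r / \<phi>)"
proof -
  define b where "b = 1 / (4 * \<phi>\<^sup>2)"
  define c where "c = 2 * \<phi> * r"
  define z where "z = r / \<phi>"
  define F where "F s = exp (- r\<^sup>2 / s) * gamma_density \<nu> b s" for s
  define G where "G t = exp (\<nu> * t) * exp (- z * cosh t)" for t
  define K0 where "K0 = b powr \<nu> / Gamma \<nu> * c powr \<nu>"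
  have bpos: "b > 0" and cpos: "c > 0" and zpos: "z > 0" using \<phi> r by (auto simp: b_def c_def z_def)
  have gpos: "Gamma \<nu> > 0" using \<nu> by (rule Gamma_real_pos)
  have K0pos: "K0 \<ge> 0" using bpos cpos gpos by (simp add: K0_def)
  have Fm[measurable]: "F \<in> borel_measurable borel" unfolding F_def gamma_density_def by measurable
  have Gm[measurable]: "G \<in> borel_measurable borel" unfolding G_def by measurable
  have F0: "F s \<ge> 0" if "s > 0" for s using that bpos gpos by (simp add: F_def gamma_density_def)
  have FG: "F (c * exp t) * (c * exp t) = K0 * G t" for t
  proof -
    have ce: "c * exp t > 0" using cpos by simp
    have p1: "(c * exp t) powr (\<nu> - 1) * (c * exp t) = c powr \<nu> * exp (\<nu> * t)"
    proof -
      have "(c * exp t) powr (\<nu> - 1) * (c * exp t) = (c * exp t) powr \<nu>"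
        using ce by (simp add: powr_diff field_simps)
      also have "\<dots> = c powr \<nu> * exp t powr \<nu>" using cpos by (simp add: powr_mult)
      also have "exp t powr \<nu> = exp (\<nu> * t)" by (simp add: powr_def mult.commute)
      finally show ?thesis .
    qed
    have e1: "r\<^sup>2 / (c * exp t) = (z / 2) * exp (- t)"
      using \<phi> r by (simp add: c_def z_def power2_eq_square exp_minus field_simps)
    have e2: "b * (c * exp t) = (z / 2) * exp t"
      using \<phi> r by (simp add: b_def c_def z_def power2_eq_square field_simps)
    have e3: "- (r\<^sup>2 / (c * exp t)) + - (b * (c * exp t)) = - z * cosh t"
      unfolding e1 e2 cosh_def by (simp add: field_simps)
    have "F (c * exp t) * (c * exp t)
        = b powr \<nu> / Gamma \<nu> * ((c * exp t) powr (\<nu> - 1) * (c * exp t)) * (exp (- (r\<^sup>2 / (c * exp t))) * exp (- (b * (c * exp t))))"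
      by (simp add: F_def gamma_density_def)
    also have "\<dots> = K0 * G t"
      unfolding p1 mult_exp_exp e3 by (simp add: K0_def G_def)
    finally show ?thesis .
  qed
  have "(\<integral>\<^sup>+s. ennreal (F s) * indicator {0<..} s \<partial>lborel) = (\<integral>\<^sup>+t. ennreal (F (c * exp t) * (c * exp t)) \<partial>lborel)"
    by (rule exp_subst[OF cpos Fm])
  also have "\<dots> = (\<integral>\<^sup>+t. ennreal K0 * ennreal (G t) \<partial>lborel)"
    using K0pos by (simp add: FG ennreal_mult')
  also have "\<dots> = ennreal K0 * (\<integral>\<^sup>+t. ennreal (G t) \<partial>lborel)"
    by (rule nn_integral_cmult) measurable
  also have "(\<integral>\<^sup>+t. ennreal (G t) \<partial>lborel) = (\<integral>\<^sup>+t. ennreal (G t + G (- t)) * indicator {0..} t \<partial>lborel)"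
    by (rule reflect_nn[OF Gm]) (simp add: G_def)
  also have "\<dots> = (\<integral>\<^sup>+t. ennreal 2 * (ennreal (exp (- z * cosh t) * cosh (\<nu> * t)) * indicator {0..} t) \<partial>lborel)"
  proof (intro nn_integral_cong)
    fix t
    have "G t + G (- t) = 2 * (exp (- z * cosh t) * cosh (\<nu> * t))"
      by (simp add: G_def cosh_def field_simps exp_minus)
    moreover have "exp (- z * cosh t) * cosh (\<nu> * t) \<ge> 0" by simp
    ultimately show "ennreal (G t + G (- t)) * indicator {0..} t = ennreal 2 * (ennreal (exp (- z * cosh t) * cosh (\<nu> * t)) * indicator {0..} t)"
      by (simp add: ennreal_mult mult.assoc)
  qed
  also have "\<dots> = ennreal 2 * (\<integral>\<^sup>+t. ennreal (exp (- z * cosh t) * cosh (\<nu> * t)) * indicator {0..} t \<partial>lborel)"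
    by (rule nn_integral_cmult) measurable
  finally have S: "(\<integral>\<^sup>+s. ennreal (F s) * indicator {0<..} s \<partial>lborel)
      = ennreal K0 * (ennreal 2 * (\<integral>\<^sup>+t. ennreal (exp (- z * cosh t) * cosh (\<nu> * t)) * indicator {0..} t \<partial>lborel))" .
  have Bk: "besselK \<nu> z = enn2real (\<integral>\<^sup>+t. ennreal (exp (- z * cosh t) * cosh (\<nu> * t)) * indicator {0..} t \<partial>lborel)"
    unfolding besselK_def by (rule set_lint_nn) auto
  have "(LBINT s:{0<..}. exp (- r\<^sup>2 / s) * gamma_density \<nu> (1 / (4 * \<phi>\<^sup>2)) s) = (LBINT s:{0<..}. F s)"
    by (simp add: F_def b_def)
  also have "\<dots> = enn2real (\<integral>\<^sup>+s. ennreal (F s) * indicator {0<..} s \<partial>lborel)"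
    using F0 by (intro set_lint_nn) auto
  also have "\<dots> = K0 * 2 * besselK \<nu> z"
    unfolding S Bk using K0pos by (simp add: enn2real_mult)
  also have "K0 * 2 = 2 powr (1 - \<nu>) / Gamma \<nu> * z powr \<nu>"
  proof -
    have bcz: "b * c = z / 2" using \<phi> r by (simp add: b_def c_def z_def power2_eq_square field_simps)
    have "b powr \<nu> * c powr \<nu> = (b * c) powr \<nu>" using bpos cpos by (simp add: powr_mult)
    also have "\<dots> = (z / 2) powr \<nu>" by (simp only: bcz)
    also have "\<dots> = z powr \<nu> / 2 powr \<nu>" using zpos by (simp add: powr_divide)
    finally have bc: "b powr \<nu> * c powr \<nu> = z powr \<nu> / 2 powr \<nu>" .
    have "K0 * 2 = 2 / 2 powr \<nu> / Gamma \<nu> * z powr \<nu>"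
    proof -
      have "K0 * 2 = 2 * (b powr \<nu> * c powr \<nu>) / Gamma \<nu>" by (simp add: K0_def)
      also have "\<dots> = 2 / 2 powr \<nu> / Gamma \<nu> * z powr \<nu>" by (simp only: bc) simp
      finally show ?thesis .
    qed
    also have "2 / 2 powr \<nu> = 2 powr (1 - \<nu>)" by (simp add: powr_diff)
    finally show ?thesis .
  qed
  finally show ?thesis by (simp add: z_def)
qed


lemma mixture:
  fixes \<nu> \<phi> r :: real
  assumes \<nu>: "\<nu> > 0" and \<phi>: "\<phi> > 0" and r: "r \<ge> 0"
  shows "(LBINT s:{0<..}. exp (- r\<^sup>2 / s) * gamma_density \<nu> (1 / (4 * \<phi>\<^sup>2)) s) = matern r \<nu> \<phi>"
proof (cases "r = 0")
  case True
  have gm[measurable]: "gamma_density \<nu> (1 / (4 * \<phi>\<^sup>2)) \<in> borel_measurable borel"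
    unfolding gamma_density_def by measurable
  have gpos: "Gamma \<nu> > 0" using \<nu> by (rule Gamma_real_pos)
  have "(LBINT s:{0<..}. exp (- r\<^sup>2 / s) * gamma_density \<nu> (1 / (4 * \<phi>\<^sup>2)) s)
      = (LBINT s:{0<..}. gamma_density \<nu> (1 / (4 * \<phi>\<^sup>2)) s)"
    using True by simp
  also have "\<dots> = enn2real (\<integral>\<^sup>+x. ennreal (gamma_density \<nu> (1 / (4 * \<phi>\<^sup>2)) x) * indicator {0<..} x \<partial>lborel)"
    using gpos by (intro set_lint_nn) (auto simp: gamma_density_def)
  also have "\<dots> = 1" using \<nu> \<phi> by (subst gamma_total) auto
  finally show ?thesis using True by (simp add: matern_def)
next
  case False
  then have "r > 0" using r by simp
  then show ?thesis using bessel_mixture_pos[OF \<nu> \<phi>] False by (simp add: matern_def)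
qed

lemma Q_nonneg:
  fixes \<Lambda> :: "real^'d::finite^'d" and g :: "real^'d"
  assumes "pos_def_sym \<Lambda>"
  shows "0 \<le> g \<bullet> (matrix_inv (u\<^sup>2 *\<^sub>R \<Lambda> + mat 1) *v g)"
proof -
  have pd\<Lambda>: "\<And>x. x \<noteq> 0 \<Longrightarrow> x \<bullet> (\<Lambda> *v x) > 0"
    using assms unfolding pos_def_sym_def by auto
  define M where "M = u\<^sup>2 *\<^sub>R \<Lambda> + mat 1"
  have pdM: "x \<bullet> (M *v x) > 0" if "x \<noteq> 0" for x
  proof -
    have "x \<bullet> (\<Lambda> *v x) \<ge> 0" using pd\<Lambda>[of x] that by simp
    then have "u\<^sup>2 * (x \<bullet> (\<Lambda> *v x)) \<ge> 0" by simp
    moreover have "x \<bullet> x > 0" using that by simp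
    moreover have "x \<bullet> (M *v x) = u\<^sup>2 * (x \<bullet> (\<Lambda> *v x)) + x \<bullet> x"
      by (simp add: M_def matrix_vector_mult_add_rdistrib scaleR_matrix_vector_assoc[symmetric] inner_add_right)
    ultimately show ?thesis by linarith
  qed
  have invM: "invertible M" by (rule pd_invertible[OF pdM])
  define y where "y = matrix_inv M *v g"
  have My: "M *v y = g" unfolding y_def by (simp add: matrix_vector_mul_assoc matrix_inv_props(1)[OF invM])
  have "g \<bullet> (matrix_inv M *v g) = (M *v y) \<bullet> y" using My by (simp add: y_def)
  also have "\<dots> = y \<bullet> (M *v y)" by (simp add: inner_commute)
  also have "\<dots> \<ge> 0" using pdM[of y] by (cases "y = 0") auto
  finally show ?thesis by (simp add: M_def)
qed

theorem proposition1:
  fixes \<sigma>2 \<nu> \<phi> u :: real and lam h :: "real^'d" and \<Lambda> :: "real^'d^'d"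
  assumes "\<sigma>2 > 0" and "\<nu> > 0" and "\<phi> > 0" and "pos_def_sym \<Lambda>"
  defines "Cs \<equiv> (\<lambda>(x::real^'d) (\<rho>::real). \<sigma>2 * exp (- (norm x)\<^sup>2 / \<rho>\<^sup>2))"
  defines "C \<equiv> (\<lambda>(h::real^'d) (u::real) (\<rho>::real).
                 mvn_expect lam ((\<rho>\<^sup>2 / 2) *\<^sub>R \<Lambda>) (\<lambda>v. Cs (h - u *\<^sub>R v) \<rho>))"
  defines "K \<equiv> (\<lambda>(h::real^'d) (u::real).
                 LBINT s:{0<..}. C h u (sqrt s) * gamma_density \<nu> (1 / (4 * \<phi>\<^sup>2)) s)"
  defines "hu \<equiv> sqrt ((h - u *\<^sub>R lam) \<bullet> (matrix_inv (u\<^sup>2 *\<^sub>R \<Lambda> + mat 1) *v (h - u *\<^sub>R lam)))"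
  shows "K h u = \<sigma>2 * det (mat 1 + u\<^sup>2 *\<^sub>R \<Lambda>) powr (-1/2) * matern hu \<nu> \<phi>"
proof -
  define Q where "Q = (h - u *\<^sub>R lam) \<bullet> (matrix_inv (u\<^sup>2 *\<^sub>R \<Lambda> + mat 1) *v (h - u *\<^sub>R lam))"
  define D where "D = det (mat 1 + u\<^sup>2 *\<^sub>R \<Lambda>) powr (-1/2)"
  have Q0: "Q \<ge> 0" unfolding Q_def by (rule Q_nonneg[OF assms(4)])
  have huQ: "hu\<^sup>2 = Q" unfolding hu_def Q_def[symmetric] using Q0 by simp
  have hu0: "hu \<ge> 0" unfolding hu_def Q_def[symmetric] using Q0 by simp
  have Cval: "C h u (sqrt s) = \<sigma>2 * D * exp (- hu\<^sup>2 / s)" if "s > 0" for s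
  proof -
    have "C h u (sqrt s) = mvn_expect lam ((s / 2) *\<^sub>R \<Lambda>) (\<lambda>v. \<sigma>2 * exp (- (norm (h - u *\<^sub>R v))\<^sup>2 / s))"
      using that by (simp add: C_def Cs_def)
    also have "\<dots> = \<sigma>2 * D * exp (- Q / s)"
      unfolding D_def Q_def by (rule C_formula[OF that assms(4)])
    finally show ?thesis by (simp add: huQ)
  qed
  have "K h u = (LBINT s:{0<..}. (\<sigma>2 * D) * (exp (- hu\<^sup>2 / s) * gamma_density \<nu> (1 / (4 * \<phi>\<^sup>2)) s))"
    unfolding K_def by (intro set_lebesgue_integral_cong) (auto simp: Cval)
  also have "\<dots> = (\<sigma>2 * D) * (LBINT s:{0<..}. exp (- hu\<^sup>2 / s) * gamma_density \<nu> (1 / (4 * \<phi>\<^sup>2)) s)"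
    by (rule set_integral_mult_right)
  also have "\<dots> = \<sigma>2 * D * matern hu \<nu> \<phi>"
    using mixture[OF assms(2) assms(3) hu0] by simp
  finally show ?thesis by (simp add: D_def)
qed

end
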